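(* The category of abelian group objects in $\mathbf{DPAlg}_R$ (equivalently, by the preceding result, $DP$ algebras with zero multiplication, with $DP$ algebra maps) is equivalent to the category of left $U(0)$-modules. Under this equivalence a $DP$ algebra $A$ with zero product corresponds to its underlying $R$-module with $\phi_p$ acting as $\gamma_p$ for each prime $p$, and conversely a left $U(0)$-module $M$ becomes a $DP$ algebra with zero product and $\gamma_n=\phi_n$ (action of the element $\phi_n\in U(0)$) for all $n\ge1$.
   Context: Fix a commutative unital ring $R$; unadorned $\otimes$ means $\otimes_R$. An "algebra" means a commutative, not necessarily unital, $R$-algebra. A $DP$ algebra is an algebra $A$ with maps $\gamma_n:A\to A$ ($n\ge1$) such that for all $a,b\in A$, $r\in R$, $m,n\ge1$: $\gamma_1(a)=a$; $\gamma_n(a+b)=\gamma_n(a)+\sum_{i+j=n,\,i,j\ge1}\gamma_i(a)\gamma_j(b)+\gamma_n(b)$; $\gamma_n(ab)=a^n\gamma_n(b)$; $\gamma_n(rb)=r^n\gamma_n(b)$; $\gamma_m(a)\gamma_n(a)=\frac{(m+n)!}{m!\,n!}\gamma_{m+n}(a)$; $\gamma_m(\gamma_n(a))=\frac{(mn)!}{m!(n!)^m}\gamma_{mn}(a)$. $\mathbf{DPAlg}_R$ is the category of $DP$ algebras and algebra maps commuting with all $\gamma_n$. $U(0)$ is the (generally non-commutative, non-$R$-central) unital ring generated by $R$ and symbols $\phi_p$, one for each prime $p$, which commute with one another, subject to the relations $p\phi_p=0$ and $\phi_p r=r^p\phi_p$ for $r\in R$. Set $\phi_1=1$, $\phi_{p^e}=\phi_p^e$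 for $p$ prime and $e\ge1$, and $\phi_n=0$ if $n>1$ is not a prime power. Thus a left $U(0)$-module is an $R$-module $M$ with additive endomorphisms $\phi_p$ ($p$ prime), pairwise commuting, with $p\phi_p=0$ and $\phi_p(rx)=r^p\phi_p(x)$. *)

theory Defs
  imports "HOL-Computational_Algebra.Primes"
begin

definition is_module :: "('r::comm_ring_1 \<Rightarrow> 'a::ab_group_add \<Rightarrow> 'a) \<Rightarrow> bool" where
  "is_module smult \<longleftrightarrow>
     (\<forall>r x y. smult r (x + y) = smult r x + smult r y) \<and>
     (\<forall>r s x. smult (r + s) x = smult r x + smult s x) \<and>
     (\<forall>r s x. smult (r * s) x = smult r (smult s x)) \<and>
     (\<forall>x. smult 1 x = x)"

definition is_linear :: "('r::comm_ring_1 \<Rightarrow> 'a::ab_group_add \<Rightarrow> 'a) \<Rightarrow>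
    ('r \<Rightarrow> 'b::ab_group_add \<Rightarrow> 'b) \<Rightarrow> ('a \<Rightarrow> 'b) \<Rightarrow> bool" where
  "is_linear smultA smultB f \<longleftrightarrow>
     (\<forall>x y. f (x + y) = f x + f y) \<and> (\<forall>r x. f (smultA r x) = smultB r (f x))"

definition is_algebra :: "('r::comm_ring_1 \<Rightarrow> 'a::ab_group_add \<Rightarrow> 'a) \<Rightarrow> ('a \<Rightarrow> 'a \<Rightarrow> 'a) \<Rightarrow> bool" where
  "is_algebra smult mul \<longleftrightarrow> is_module smult \<and>
     (\<forall>a b c. mul (mul a b) c = mul a (mul b c)) \<and>
     (\<forall>a b. mul a b = mul b a) \<and>
     (\<forall>a b c. mul a (b + c) = mul a b + mul a c) \<and>
     (\<forall>r a b. mul (smult r a) b = smult r (mul a b))"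

text \<open>a^n for n \<ge> 1 in a non-unital algebra: apow mul a n = a * ... * a (n factors).\<close>
definition apow :: "('a \<Rightarrow> 'a \<Rightarrow> 'a) \<Rightarrow> 'a \<Rightarrow> nat \<Rightarrow> 'a" where
  "apow mul a n = ((\<lambda>x. mul a x) ^^ (n - 1)) a"

abbreviation natmult :: "('r::comm_ring_1 \<Rightarrow> 'a \<Rightarrow> 'a) \<Rightarrow> nat \<Rightarrow> 'a \<Rightarrow> 'a" where
  "natmult smult c x \<equiv> smult (of_nat c) x"

definition is_dp_alg :: "('r::comm_ring_1 \<Rightarrow> 'a::ab_group_add \<Rightarrow> 'a) \<Rightarrow> ('a \<Rightarrow> 'a \<Rightarrow> 'a) \<Rightarrow>
    (nat \<Rightarrow> 'a \<Rightarrow> 'a) \<Rightarrow> bool" where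
  "is_dp_alg smult mul gamma \<longleftrightarrow> is_algebra smult mul \<and>
     (\<forall>a. gamma 1 a = a) \<and>
     (\<forall>n a b. n \<ge> 1 \<longrightarrow> gamma n (a + b) =
         gamma n a + (\<Sum>i\<in>{1..<n}. mul (gamma i a) (gamma (n - i) b)) + gamma n b) \<and>
     (\<forall>n a b. n \<ge> 1 \<longrightarrow> gamma n (mul a b) = mul (apow mul a n) (gamma n b)) \<and>
     (\<forall>n r b. n \<ge> 1 \<longrightarrow> gamma n (smult r b) = smult (r ^ n) (gamma n b)) \<and>
     (\<forall>m n a. m \<ge> 1 \<longrightarrow> n \<ge> 1 \<longrightarrow>
         mul (gamma m a) (gamma n a) = natmult smult (fact (m + n) div (fact m * fact n)) (gamma (m + n) a)) \<and>
     (\<forall>m n a. m \<ge> 1 \<longrightarrow> n \<ge> 1 \<longrightarrow>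
         gamma m (gamma n a) = natmult smult (fact (m * n) div (fact m * fact n ^ m)) (gamma (m * n) a))"

definition is_dp_hom :: "('r::comm_ring_1 \<Rightarrow> 'a::ab_group_add \<Rightarrow> 'a) \<Rightarrow> ('a \<Rightarrow> 'a \<Rightarrow> 'a) \<Rightarrow> (nat \<Rightarrow> 'a \<Rightarrow> 'a) \<Rightarrow>
    ('r \<Rightarrow> 'b::ab_group_add \<Rightarrow> 'b) \<Rightarrow> ('b \<Rightarrow> 'b \<Rightarrow> 'b) \<Rightarrow> (nat \<Rightarrow> 'b \<Rightarrow> 'b) \<Rightarrow> ('a \<Rightarrow> 'b) \<Rightarrow> bool" where
  "is_dp_hom smultA mulA gA smultB mulB gB f \<longleftrightarrow> is_linear smultA smultB f \<and>
     (\<forall>a b. f (mulA a b) = mulB (f a) (f b)) \<and>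
     (\<forall>n a. n \<ge> 1 \<longrightarrow> f (gA n a) = gB n (f a))"

text \<open>Left U(0)-module: R-module with additive endomorphisms phi p (p prime),
  pairwise commuting, p phi_p = 0, phi_p (r x) = r^p phi_p x.
  Only the values of phi at primes are relevant.\<close>
definition is_U0_module :: "('r::comm_ring_1 \<Rightarrow> 'a::ab_group_add \<Rightarrow> 'a) \<Rightarrow> (nat \<Rightarrow> 'a \<Rightarrow> 'a) \<Rightarrow> bool" where
  "is_U0_module smult phi \<longleftrightarrow> is_module smult \<and>
     (\<forall>p x y. prime p \<longrightarrow> phi p (x + y) = phi p x + phi p y) \<and>
     (\<forall>p q x. prime p \<longrightarrow> prime q \<longrightarrow> phi p (phi q x) = phi q (phi p x)) \<and>
     (\<forall>p x. prime p \<longrightarrow> natmult smult p (phi p x) = 0) \<and>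
     (\<forall>p r x. prime p \<longrightarrow> phi p (smult r x) = smult (r ^ p) (phi p x))"

definition is_U0_hom :: "('r::comm_ring_1 \<Rightarrow> 'a::ab_group_add \<Rightarrow> 'a) \<Rightarrow> (nat \<Rightarrow> 'a \<Rightarrow> 'a) \<Rightarrow>
    ('r \<Rightarrow> 'b::ab_group_add \<Rightarrow> 'b) \<Rightarrow> (nat \<Rightarrow> 'b \<Rightarrow> 'b) \<Rightarrow> ('a \<Rightarrow> 'b) \<Rightarrow> bool" where
  "is_U0_hom smultA phiA smultB phiB f \<longleftrightarrow> is_linear smultA smultB f \<and>
     (\<forall>p x. prime p \<longrightarrow> f (phiA p x) = phiB p (f x))"

text \<open>Action of the element phi_n of U(0): phi_1 = 1, phi_(p^e) = phi_p^e, phi_n = 0 otherwise.\<close>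
definition phi_n :: "(nat \<Rightarrow> 'a::zero \<Rightarrow> 'a) \<Rightarrow> nat \<Rightarrow> 'a \<Rightarrow> 'a" where
  "phi_n phi n =
     (if n = 1 then id
      else if (\<exists>p e. prime p \<and> e \<ge> 1 \<and> n = p ^ e)
      then (let p = (THE p. prime p \<and> p dvd n) in phi p ^^ multiplicity p n)
      else (\<lambda>_. 0))"

abbreviation zmult :: "'a::zero \<Rightarrow> 'a \<Rightarrow> 'a" where
  "zmult \<equiv> (\<lambda>_ _. 0)"

end

theory Submission
  imports Defs "HOL-Number_Theory.Cong"
begin


lemma NT1:
  fixes p n k b :: nat
  assumes p: "prime p" and k: "0 < k" "k < p ^ b" and d: "p ^ b dvd n"
  shows "p dvd (n choose k)"
proof (rule ccontr)
  assume np: "\<not> p dvd (n choose k)"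
  have "k * (n choose k) = n * ((n - 1) choose (k - 1))"
    using k by (intro times_binomial_minus1_eq) simp
  hence "p ^ b dvd k * (n choose k)" using d by (metis dvd_mult2)
  moreover have "coprime (p ^ b) (n choose k)"
    using np p by (simp add: prime_imp_coprime coprime_commute)
  ultimately have "p ^ b dvd k" using coprime_dvd_mult_left_iff by blast
  thus False using k by (simp add: nat_dvd_not_less)
qed

lemma NT2aux:
  fixes p b j k :: nat
  assumes p: "prime p" and j: "j \<ge> 1" and k: "k < p ^ b"
  shows "[int ((j * p ^ b - 1) choose k) = (-1) ^ k] (mod int p)"
  using k
proof (induction k)
  case 0 then show ?case by simp
next
  case (Suc k)
  have pos: "j * p ^ b \<ge> 1" using j p by (simp add: prime_gt_0_nat Suc_le_eq)
  have "j * p ^ b = Suc (j * p ^ b - 1)" using pos by linarith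
  hence pas: "(j * p ^ b choose Suc k) = ((j * p ^ b - 1) choose k) + ((j * p ^ b - 1) choose Suc k)"
    by (metis binomial_Suc_Suc)
  have "p dvd (j * p ^ b choose Suc k)"
    by (rule NT1[OF p _ Suc.prems]) auto
  hence d1: "int p dvd int ((j * p ^ b - 1) choose k) + int ((j * p ^ b - 1) choose Suc k)"
    using pas by (metis of_nat_add of_nat_dvd_iff)
  have d2: "int p dvd int ((j * p ^ b - 1) choose k) - (-1) ^ k"
    using Suc by (simp add: cong_iff_dvd_diff)
  have "int p dvd (int ((j * p ^ b - 1) choose k) + int ((j * p ^ b - 1) choose Suc k))
     - (int ((j * p ^ b - 1) choose k) - (-1) ^ k)"
    using d1 d2 by (rule dvd_diff)
  hence "int p dvd int ((j * p ^ b - 1) choose Suc k) - (-1) ^ Suc k" by simp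
  thus ?case by (simp add: cong_iff_dvd_diff)
qed

lemma NT2:
  fixes p b j :: nat
  assumes p: "prime p" and j: "j \<ge> 1"
  shows "[(j * p ^ b - 1) choose (p ^ b - 1) = 1] (mod p)"
proof -
  have pb: "p ^ b > 0" using p by (simp add: prime_gt_0_nat)
  have c: "[int ((j * p ^ b - 1) choose (p ^ b - 1)) = (-1) ^ (p ^ b - 1)] (mod int p)"
    using NT2aux[OF p j, of "p ^ b - 1"] pb by simp
  have "[(-1::int) ^ (p ^ b - 1) = 1] (mod int p)"
  proof (cases "p = 2")
    case True
    have "[(-1::int) = 1] (mod 2)" by (simp add: cong_iff_dvd_diff)
    hence "[(-1::int) ^ (p ^ b - 1) = 1 ^ (p ^ b - 1)] (mod 2)" by (rule cong_pow)
    then show ?thesis using True by simp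
  next
    case False
    have "p \<ge> 2" using p prime_ge_2_nat by blast
    hence "odd p" using p False prime_odd_nat[of p] by linarith
    hence "odd (p ^ b)" by simp
    hence "even (p ^ b - 1)" using pb by simp
    then show ?thesis by simp
  qed
  with c have "[int ((j * p ^ b - 1) choose (p ^ b - 1)) = int 1] (mod int p)"
    using cong_trans by fastforce
  thus ?thesis using cong_int_iff by blast
qed

lemma NT3prod:
  fixes m n :: nat
  assumes n: "n \<ge> 1"
  shows "fact (m * n) = (fact m * fact n ^ m * (\<Prod>j\<in>{1..m}. (j * n - 1) choose (n - 1)) :: nat)"
proof (induction m)
  case 0 then show ?case by simp
next
  case (Suc m)
  have f: "fact (Suc m * n) = (fact (m * n) * fact n * (Suc m * n choose n) :: nat)"
    using binomial_fact_lemma[of n "Suc m * n"] by (simp add: algebra_simps)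
  have "n * (Suc m * n choose n) = Suc m * n * ((Suc m * n - 1) choose (n - 1))"
    using times_binomial_minus1_eq[of n "Suc m * n"] n by simp
  hence cc: "(Suc m * n choose n) = Suc m * ((Suc m * n - 1) choose (n - 1))"
    using n by (metis mult.assoc mult.commute nat_mult_eq_cancel1 not_one_le_zero neq0_conv)
  have pr: "(\<Prod>j\<in>{1..Suc m}. (j * n - 1) choose (n - 1)) =
        (\<Prod>j\<in>{1..m}. (j * n - 1) choose (n - 1)) * ((Suc m * n - 1) choose (n - 1))"
    by (simp add: prod.nat_ivl_Suc')
  show ?case unfolding f cc pr Suc.IH by (simp add: algebra_simps)
qed

lemma NT3:
  fixes p a b :: nat
  assumes p: "prime p"
  shows "[fact (m * p ^ b) div (fact m * fact (p ^ b) ^ m) = 1] (mod p)"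
proof -
  have n: "p ^ b \<ge> 1" using p by (simp add: prime_gt_0_nat Suc_le_eq)
  have pos: "(fact m * fact (p ^ b) ^ m :: nat) > 0" by simp
  have "fact (m * p ^ b) div (fact m * fact (p ^ b) ^ m) = (\<Prod>j\<in>{1..m}. (j * p ^ b - 1) choose (p ^ b - 1))"
    using NT3prod[OF n, of m] pos by simp
  also have "[\<dots> = (\<Prod>j\<in>{1..m}. 1)] (mod p)"
    by (rule cong_prod) (use NT2[OF p] in auto)
  finally show ?thesis by simp
qed



abbreviation pp :: "nat \<Rightarrow> bool" where
  "pp n \<equiv> (\<exists>p e. prime p \<and> e \<ge> 1 \<and> n = p ^ e)"

lemma mod_zero: "is_module sm \<Longrightarrow> sm r 0 = 0"
  unfolding is_module_def by (metis add_cancel_left_left add_0)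

lemma mod_nat_mult: "is_module sm \<Longrightarrow> sm (of_nat (a * b)) x = sm (of_nat a) (sm (of_nat b) x)"
  unfolding is_module_def by (simp add: of_nat_mult)

lemma mod_cong1:
  fixes sm :: "'r::comm_ring_1 \<Rightarrow> 'a::ab_group_add \<Rightarrow> 'a"
  assumes M: "is_module sm" and g: "sm (of_nat p) g = 0" and c: "c mod p = 1"
  shows "sm (of_nat c) g = g"
proof -
  have "c = p * (c div p) + c mod p" by simp
  hence "c = p * (c div p) + 1" using c by simp
  hence "(of_nat c :: 'r) = of_nat (p * (c div p) + 1)" by simp
  hence "(of_nat c :: 'r) = of_nat (c div p) * of_nat p + 1" by (simp add: algebra_simps)
  hence "sm (of_nat c) g = sm (of_nat (c div p) * of_nat p + 1) g" by simp
  also have "\<dots> = sm (of_nat (c div p)) (sm (of_nat p) g) + g"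
    using M unfolding is_module_def by simp
  also have "\<dots> = g" using g mod_zero[OF M] by simp
  finally show ?thesis .
qed

lemma mod_gcd:
  fixes sm :: "'r::comm_ring_1 \<Rightarrow> 'a::ab_group_add \<Rightarrow> 'a"
  assumes M: "is_module sm" and a: "sm (of_nat a) g = 0" and b: "sm (of_nat b) g = 0"
  shows "sm (of_nat (gcd a b)) g = 0"
proof -
  obtain u v :: int where uv: "u * int a + v * int b = gcd (int a) (int b)"
    using bezout_int by blast
  hence "int (gcd a b) = u * int a + v * int b" by simp
  hence "(of_nat (gcd a b) :: 'r) = of_int u * of_nat a + of_int v * of_nat b"
    by (metis of_int_add of_int_mult of_int_of_nat_eq)
  hence "sm (of_nat (gcd a b)) g = sm (of_int u) (sm (of_nat a) g) + sm (of_int v) (sm (of_nat b) g)"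
    using M unfolding is_module_def by simp
  thus ?thesis using a b mod_zero[OF M] by simp
qed

lemma mod_least:
  assumes M: "is_module sm" and n: "n > 0" "sm (of_nat n) g = 0"
    and P: "\<And>p. prime p \<Longrightarrow> p dvd n \<Longrightarrow> \<exists>c. \<not> p dvd c \<and> sm (of_nat c) g = 0"
  shows "g = 0"
proof -
  define d where "d = (LEAST d. d > 0 \<and> sm (of_nat d) g = 0)"
  have d: "d > 0 \<and> sm (of_nat d) g = 0" unfolding d_def by (rule LeastI[of _ n]) (use n in auto)
  have dvd: "d dvd c" if c: "sm (of_nat c) g = 0" for c
  proof -
    have "sm (of_nat (gcd d c)) g = 0" by (rule mod_gcd[OF M]) (use d c in auto)
    moreover have "gcd d c > 0" using d by simp
    ultimately have "d \<le> gcd d c" unfolding d_def by (intro Least_le) simp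
    moreover have "gcd d c \<le> d" using d by (simp add: gcd_le1_nat)
    ultimately have "gcd d c = d" by simp
    thus ?thesis by (metis gcd_dvd2)
  qed
  have "d = 1"
  proof (rule ccontr)
    assume "d \<noteq> 1"
    then obtain p where p: "prime p" "p dvd d" using prime_factor_nat by blast
    have "p dvd n" using p dvd[OF n(2)] dvd_trans by blast
    then obtain c where c: "\<not> p dvd c" "sm (of_nat c) g = 0" using P p by blast
    from dvd[OF c(2)] p have "p dvd c" using dvd_trans by blast
    with c show False by simp
  qed
  with d show ?thesis using M unfolding is_module_def by simp
qed

lemma add_zero: "(\<forall>x y. F (x + y) = F x + (F y :: 'a::ab_group_add)) \<Longrightarrow> F (0::'b::ab_group_add) = 0"
proof -
  assume "\<forall>x y. F (x + y) = F x + (F y :: 'a::ab_group_add)"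
  hence "F (0 + 0) = F 0 + F 0" by blast
  thus ?thesis by simp
qed

lemma add_natmult:
  assumes M: "is_module sm" and M2: "is_module sm2" and F: "\<forall>x y. F (x + y) = F x + F y"
  shows "F (sm (of_nat k) y) = sm2 (of_nat k) (F y)"
proof (induction k)
  case 0
  have "sm (0 + 0) y = sm 0 y + sm 0 y" using M unfolding is_module_def by blast
  hence "sm 0 y = 0" by simp
  moreover have "sm2 (0 + 0) (F y) = sm2 0 (F y) + sm2 0 (F y)" using M2 unfolding is_module_def by blast
  hence "sm2 0 (F y) = 0" by simp
  ultimately show ?case using add_zero[OF F] by simp
next
  case (Suc k)
  have "sm (of_nat (Suc k)) y = sm (of_nat k) y + y" using M unfolding is_module_def by (simp add: algebra_simps)
  moreover have "sm2 (of_nat (Suc k)) (F y) = sm2 (of_nat k) (F y) + F y" using M2 unfolding is_module_def by (simp add: algebra_simps)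
  ultimately show ?case using Suc F by simp
qed

lemma funpow_add_hom:
  fixes F :: "'a::ab_group_add \<Rightarrow> 'a"
  assumes F: "\<forall>x y. F (x + y) = F x + F y"
  shows "(F ^^ e) (x + y) = (F ^^ e) x + (F ^^ e) y"
proof (induction e)
  case 0 show ?case by simp
next
  case (Suc e) thus ?case using F by simp
qed

lemma funpow_comm1: "(\<forall>x. f (g x) = g (f x)) \<Longrightarrow> (f ^^ a) (g x) = g ((f ^^ a) x)"
  by (induction a) auto

lemma funpow_comm2: "(\<forall>x. f (g x) = g (f x)) \<Longrightarrow> (f ^^ a) ((g ^^ b) x) = (g ^^ b) ((f ^^ a) x)"
proof (induction b)
  case 0 then show ?case by simp
next
  case (Suc b)
  then show ?case using funpow_comm1[of f g a] by simp
qed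

lemma hom_funpow: "(\<forall>x. f (F x) = G (f x)) \<Longrightarrow> f ((F ^^ e) x) = (G ^^ e) (f x)"
  by (induction e) auto

section \<open>Prime powers\<close>

lemma the_prime: "prime p \<Longrightarrow> e \<ge> 1 \<Longrightarrow> (THE q. prime q \<and> q dvd p ^ e) = p"
  apply (rule the_equality)
   apply (simp add: dvd_power)
  by (meson prime_dvd_power primes_dvd_imp_eq)

lemma pp_ne1: "prime p \<Longrightarrow> e \<ge> 1 \<Longrightarrow> p ^ e \<noteq> (1::nat)"
proof
  assume "prime p" "e \<ge> 1" "p ^ e = 1"
  have "p \<ge> 2" using \<open>prime p\<close> prime_ge_2_nat by blast
  moreover have "p \<le> p ^ e" using \<open>e \<ge> 1\<close> \<open>p \<ge> 2\<close> by (simp add: self_le_power)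
  ultimately show False using \<open>p ^ e = 1\<close> by simp
qed

lemma phi_n_1: "phi_n phi 1 = id" unfolding phi_n_def by simp

lemma phi_n_Suc0[simp]: "phi_n phi (Suc 0) x = x" unfolding phi_n_def by simp

lemma phi_n_pp: "prime p \<Longrightarrow> e \<ge> 1 \<Longrightarrow> phi_n phi (p ^ e) = phi p ^^ e"
  unfolding phi_n_def using pp_ne1[of p e] the_prime[of p e]
  by (auto simp: Let_def prime_imp_prime_elem)

lemma phi_n_np: "n \<noteq> 1 \<Longrightarrow> \<not> pp n \<Longrightarrow> phi_n phi n = (\<lambda>_. 0)"
  unfolding phi_n_def by auto

lemma pp_mult: "pp (m * n) \<Longrightarrow> m \<ge> 2 \<Longrightarrow> pp m"
proof -
  assume "pp (m * n)" "m \<ge> 2"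
  then obtain p e where pe: "prime p" "e \<ge> 1" "m * n = p ^ e" by blast
  hence "m dvd p ^ e" by (metis dvd_triv_left)
  then obtain i where "m = p ^ i" using divides_primepow_nat[OF pe(1)] by blast
  moreover have "i \<ge> 1" using \<open>m \<ge> 2\<close> calculation by (cases i) auto
  ultimately show "pp m" using pe by blast
qed

lemma pp_distinct:
  assumes "prime p" "prime q" "p \<noteq> q" "a \<ge> 1" "b \<ge> 1"
  shows "\<not> pp (p ^ a * q ^ b)"
proof
  assume "pp (p ^ a * q ^ b)"
  then obtain r e where re: "prime r" "e \<ge> 1" "p ^ a * q ^ b = r ^ e" by blast
  have "p dvd p ^ a" using assms by (simp add: dvd_power)
  hence "p dvd r ^ e" using re by (metis dvd_mult2)
  hence "p = r" using assms re by (meson prime_dvd_power primes_dvd_imp_eq)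
  have "q dvd q ^ b" using assms by (simp add: dvd_power)
  hence "q dvd r ^ e" using re by (metis dvd_mult)
  hence "q = r" using assms re by (meson prime_dvd_power primes_dvd_imp_eq)
  with \<open>p = r\<close> assms show False by simp
qed

lemma fact_div_choose: "fact (m + n) div (fact m * fact n) = ((m + n) choose m :: nat)"
proof -
  have "fact m * fact n * ((m + n) choose m) = (fact (m + n) :: nat)"
    using binomial_fact_lemma[of m "m + n"] by simp
  moreover have "(fact m * fact n :: nat) \<noteq> 0" by simp
  ultimately show ?thesis by (metis nonzero_mult_div_cancel_left)
qed



context
  fixes sm :: "'r::comm_ring_1 \<Rightarrow> 'a::ab_group_add \<Rightarrow> 'a" and gamma :: "nat \<Rightarrow> 'a \<Rightarrow> 'a"
  assumes DP: "is_dp_alg sm (\<lambda>_ _. 0) gamma"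
begin

lemma dp_mod: "is_module sm"
  using DP unfolding is_dp_alg_def is_algebra_def by blast

lemma dp_g1: "gamma 1 a = a"
  using DP unfolding is_dp_alg_def by blast

lemma dp_add: "n \<ge> 1 \<Longrightarrow> gamma n (a + b) = gamma n a + gamma n b"
  using DP unfolding is_dp_alg_def by simp

lemma dp_smult: "n \<ge> 1 \<Longrightarrow> gamma n (sm r b) = sm (r ^ n) (gamma n b)"
  using DP unfolding is_dp_alg_def by blast

lemma dp_comp: "m \<ge> 1 \<Longrightarrow> n \<ge> 1 \<Longrightarrow>
   gamma m (gamma n a) = sm (of_nat (fact (m * n) div (fact m * fact n ^ m))) (gamma (m * n) a)"
  using DP unfolding is_dp_alg_def by blast

lemma dp_ann: assumes "0 < k" "k < n" shows "sm (of_nat (n choose k)) (gamma n a) = 0"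
proof -
  have "0 = sm (of_nat (fact (k + (n - k)) div (fact k * fact (n - k)))) (gamma (k + (n - k)) a)"
  proof -
    have H: "\<forall>m n a. m \<ge> 1 \<longrightarrow> n \<ge> 1 \<longrightarrow>
         (0::'a) = sm (of_nat (fact (m + n) div (fact m * fact n))) (gamma (m + n) a)"
      using DP unfolding is_dp_alg_def by blast
    have "k \<ge> 1" "n - k \<ge> 1" using assms by auto
    thus ?thesis using H by blast
  qed
  thus ?thesis using assms fact_div_choose[of k "n - k"] by simp
qed

lemma dp_self_ann: "n \<ge> 2 \<Longrightarrow> sm (of_nat n) (gamma n a) = 0"
  using dp_ann[of 1 n a] by simp

lemma dp_pann: "prime p \<Longrightarrow> sm (of_nat p) (gamma p a) = 0"
  using dp_self_ann prime_ge_2_nat by blast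

lemma dp_nonpp:
  assumes n: "n \<ge> 2" and np: "\<not> pp n"
  shows "gamma n a = 0"
proof (rule mod_least[OF dp_mod])
  show "n > 0" using n by simp
  show "sm (of_nat n) (gamma n a) = 0" using dp_self_ann n by simp
  fix p assume p: "prime p" "p dvd n"
  have nz: "n \<noteq> 0" using n by simp
  have nu: "\<not> is_unit p" using p not_prime_unit by blast
  obtain m where m: "n = p ^ multiplicity p n * m" "\<not> p dvd m"
    using multiplicity_decompose'[OF nz nu] by blast
  define e where "e = multiplicity p n"
  have e: "e \<ge> 1" using multiplicity_gt_zero_iff[OF nz nu] p unfolding e_def by simp
  have mE: "n = p ^ e * m" using m unfolding e_def by simp
  have "m \<noteq> 1" using np mE e p by (metis mult.right_neutral)
  moreover have "m \<noteq> 0" using m(2) by (metis dvd_0_right)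
  ultimately have m2: "m \<ge> 2" by simp
  have pe: "p ^ e > 0" using p by (simp add: prime_gt_0_nat)
  have "p ^ e * 1 < p ^ e * m" using pe m2 by (intro mult_strict_left_mono) auto
  hence lt: "p ^ e < n" using mE by simp
  have "p ^ e * (n choose p ^ e) = n * ((n - 1) choose (p ^ e - 1))"
    using pe by (intro times_binomial_minus1_eq)
  also have "\<dots> = p ^ e * (m * ((m * p ^ e - 1) choose (p ^ e - 1)))"
    using mE by (simp add: mult.commute mult.left_commute)
  finally have cc: "(n choose p ^ e) = m * ((m * p ^ e - 1) choose (p ^ e - 1))"
    using pe by (metis mult_left_cancel not_less0 neq0_conv)
  have x1: "[(m * p ^ e - 1) choose (p ^ e - 1) = 1] (mod p)"
    using NT2[OF p(1), of m e] m2 by simp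
  have "\<not> p dvd (n choose p ^ e)"
  proof
    assume "p dvd (n choose p ^ e)"
    hence "p dvd m \<or> p dvd ((m * p ^ e - 1) choose (p ^ e - 1))" using cc p prime_dvd_mult_iff by metis
    moreover have "\<not> p dvd ((m * p ^ e - 1) choose (p ^ e - 1))"
    proof -
      have "1 < p" using p prime_gt_1_nat by blast
      hence "((m * p ^ e - 1) choose (p ^ e - 1)) mod p = 1" using x1 unfolding cong_def by simp
      thus ?thesis by (auto simp: dvd_eq_mod_eq_0)
    qed
    ultimately show False using m by blast
  qed
  moreover have "sm (of_nat (n choose p ^ e)) (gamma n a) = 0"
    using dp_ann pe lt by simp
  ultimately show "\<exists>c. \<not> p dvd c \<and> sm (of_nat c) (gamma n a) = 0" by blast
qed

lemma dp_pp_step: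
  assumes p: "prime p"
  shows "gamma (p ^ Suc e) = gamma p ^^ Suc e"
proof (induction e)
  case 0 then show ?case by (simp add: fun_eq_iff)
next
  case (Suc e)
  show ?case
  proof
    fix x
    define g where "g = gamma (p ^ Suc (Suc e)) x"
    define c :: nat where "c = fact (p * p ^ Suc e) div (fact p * fact (p ^ Suc e) ^ p)"
    have p1: "p \<ge> 1" using p prime_ge_1_nat by blast
    have pe1: "p ^ Suc e \<ge> 1" using p by (simp add: prime_gt_0_nat Suc_le_eq)
    have comp: "gamma p (gamma (p ^ Suc e) x) = sm (of_nat c) g"
      using dp_comp[OF p1 pe1, of x] unfolding c_def g_def by (simp add: power_Suc)
    have c1: "c mod p = 1"
      using NT3[OF p, of p "Suc e"] p unfolding c_def cong_def
      by (metis mod_less prime_gt_1_nat)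
    have a1: "sm (of_nat (p * c)) g = 0"
      using dp_pann[OF p, of "gamma (p ^ Suc e) x"] comp mod_nat_mult[OF dp_mod] by simp
    have "p \<ge> 2" using p prime_ge_2_nat by blast
    hence "2 * 1 \<le> p * p ^ Suc e" using pe1 by (intro mult_mono) auto
    hence "p ^ Suc (Suc e) \<ge> 2" by simp
    hence a2: "sm (of_nat (p ^ Suc (Suc e))) g = 0"
      unfolding g_def by (rule dp_self_ann)
    have cop: "coprime c p"
      using c1 p by (metis coprime_commute dvd_imp_mod_0 prime_imp_coprime zero_neq_one)
    have "gcd (p * c) (p ^ Suc (Suc e)) = p * gcd c (p ^ Suc e)"
      by (simp add: gcd_mult_distrib_nat)
    also have "gcd c (p ^ Suc e) = 1" using cop by simp
    finally have "gcd (p * c) (p ^ Suc (Suc e)) = p" by simp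
    hence "sm (of_nat p) g = 0" using mod_gcd[OF dp_mod a1 a2] by simp
    hence "sm (of_nat c) g = g" using mod_cong1[OF dp_mod _ c1] by simp
    hence "gamma p (gamma (p ^ Suc e) x) = g" using comp by simp
    thus "gamma (p ^ Suc (Suc e)) x = (gamma p ^^ Suc (Suc e)) x"
      using Suc unfolding g_def by simp
  qed
qed

lemma dp_pp: "prime p \<Longrightarrow> e \<ge> 1 \<Longrightarrow> gamma (p ^ e) = gamma p ^^ e"
  using dp_pp_step[of p "e - 1"] by simp

lemma dp_phi_n: "n \<ge> 1 \<Longrightarrow> phi_n gamma n = gamma n"
proof -
  assume n: "n \<ge> 1"
  show ?thesis
  proof (cases "n = 1")
    case True show ?thesis unfolding True phi_n_1 by (rule ext, metis dp_g1 id_apply)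
  next
    case False
    show ?thesis
    proof (cases "pp n")
      case True
      then obtain p e where "prime p" "e \<ge> 1" "n = p ^ e" by blast
      then show ?thesis using phi_n_pp[where phi=gamma] dp_pp by simp
    next
      case np: False
      have "n \<ge> 2" using n False by simp
      then show ?thesis using phi_n_np[OF False np, where phi=gamma] dp_nonpp np by (simp add: fun_eq_iff)
    qed
  qed
qed

lemma dp_U0: "is_U0_module sm gamma"
  unfolding is_U0_module_def
proof (intro conjI allI impI)
  show "is_module sm" by (rule dp_mod)
  fix p :: nat and x y assume "prime p" thus "gamma p (x + y) = gamma p x + gamma p y"
    using dp_add prime_ge_1_nat by blast
next
  fix p :: nat and x assume "prime p" thus "sm (of_nat p) (gamma p x) = 0" by (rule dp_pann)
next
  fix p :: nat and r x assume "prime p" thus "gamma p (sm r x) = sm (r ^ p) (gamma p x)"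
    using dp_smult prime_ge_1_nat by blast
next
  fix p q :: nat and x assume p: "prime p" and q: "prime q"
  show "gamma p (gamma q x) = gamma q (gamma p x)"
  proof (cases "p = q")
    case True then show ?thesis by simp
  next
    case False
    have np: "\<not> pp (p * q)" using pp_distinct[OF p q False, of 1 1] by simp
    have "p \<ge> 2" "q \<ge> 1" using p q prime_ge_2_nat prime_ge_1_nat by auto
    hence "2 * 1 \<le> p * q" by (intro mult_mono) auto
    hence ge: "p * q \<ge> 2" by simp
    have "gamma (p * q) x = 0" using dp_nonpp[OF ge np] .
    moreover have "gamma (q * p) x = 0" using dp_nonpp[of "q * p"] ge np by (simp add: mult.commute)
    ultimately show ?thesis
      using dp_comp[of p q x] dp_comp[of q p x] p q prime_ge_1_nat mod_zero[OF dp_mod] by simp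
  qed
qed

end



context
  fixes sm :: "'r::comm_ring_1 \<Rightarrow> 'a::ab_group_add \<Rightarrow> 'a" and phi :: "nat \<Rightarrow> 'a \<Rightarrow> 'a"
  assumes U: "is_U0_module sm phi"
begin

lemma u_mod: "is_module sm" using U unfolding is_U0_module_def by blast
lemma u_add: "prime p \<Longrightarrow> \<forall>x y. phi p (x + y) = phi p x + phi p y"
  using U unfolding is_U0_module_def by blast
lemma u_comm: "prime p \<Longrightarrow> prime q \<Longrightarrow> \<forall>x. phi p (phi q x) = phi q (phi p x)"
  using U unfolding is_U0_module_def by blast
lemma u_pann: "prime p \<Longrightarrow> sm (of_nat p) (phi p x) = 0"
  using U unfolding is_U0_module_def by blast
lemma u_smult: "prime p \<Longrightarrow> phi p (sm r x) = sm (r ^ p) (phi p x)"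
  using U unfolding is_U0_module_def by blast

lemma u_iter_add: "prime p \<Longrightarrow> (phi p ^^ e) (x + y) = (phi p ^^ e) x + (phi p ^^ e) y"
  using funpow_add_hom u_add by blast

lemma u_iter_smult: "prime p \<Longrightarrow> (phi p ^^ e) (sm r x) = sm (r ^ (p ^ e)) ((phi p ^^ e) x)"
proof (induction e)
  case 0 then show ?case by simp
next
  case (Suc e) then show ?case using u_smult by (simp add: power_mult[symmetric] mult.commute)
qed

lemma u_iter_pann: "prime p \<Longrightarrow> e \<ge> 1 \<Longrightarrow> sm (of_nat p) ((phi p ^^ e) x) = 0"
proof -
  assume "prime p" "e \<ge> 1"
  then obtain e' where "e = Suc e'" by (cases e) auto
  thus ?thesis using u_pann[OF \<open>prime p\<close>] by simp
qed

lemma u_distinct: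
  assumes p: "prime p" and q: "prime q" and pq: "p \<noteq> q" and a: "a \<ge> 1" and b: "b \<ge> 1"
  shows "(phi p ^^ a) ((phi q ^^ b) x) = 0"
proof -
  define w where "w = (phi p ^^ a) ((phi q ^^ b) x)"
  have 1: "sm (of_nat p) w = 0" unfolding w_def using u_iter_pann[OF p a] by simp
  have "w = (phi q ^^ b) ((phi p ^^ a) x)" unfolding w_def
    by (rule funpow_comm2) (use u_comm[OF p q] in blast)
  hence 2: "sm (of_nat q) w = 0" using u_iter_pann[OF q b] by simp
  have "gcd p q = 1" using p q pq by (simp add: primes_coprime)
  hence "sm (of_nat 1) w = 0" using mod_gcd[OF u_mod 1 2] by simp
  thus ?thesis using u_mod unfolding w_def is_module_def by simp
qed

lemma u_phin_add: "phi_n phi n (x + y) = phi_n phi n x + phi_n phi n y"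
proof (cases "n = 1")
  case True then show ?thesis by (simp add: phi_n_1)
next
  case False
  show ?thesis
  proof (cases "pp n")
    case True
    then obtain p e where "prime p" "e \<ge> 1" "n = p ^ e" by blast
    then show ?thesis using phi_n_pp[where phi=phi] u_iter_add by simp
  next
    case np: False
    show ?thesis using phi_n_np[OF False np, where phi=phi] by simp
  qed
qed

lemma u_phin_zero: "phi_n phi n 0 = 0"
  using add_zero[of "phi_n phi n"] u_phin_add by blast

lemma u_phin_smult: "n \<ge> 1 \<Longrightarrow> phi_n phi n (sm r b) = sm (r ^ n) (phi_n phi n b)"
proof (cases "n = 1")
  case True then show ?thesis by (simp add: phi_n_1)
next
  case False
  show ?thesis
  proof (cases "pp n")
    case True
    then obtain p e where "prime p" "e \<ge> 1" "n = p ^ e" by blast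
    then show ?thesis using phi_n_pp[where phi=phi] u_iter_smult by simp
  next
    case np: False
    show ?thesis using phi_n_np[OF False np, where phi=phi] mod_zero[OF u_mod] by simp
  qed
qed

lemma u_phin_prime: "prime p \<Longrightarrow> phi_n phi p = phi p"
  using phi_n_pp[of p 1 phi] by simp

lemma u_prod:
  assumes "m \<ge> 1" "n \<ge> 1"
  shows "sm (of_nat ((m + n) choose m)) (phi_n phi (m + n) a) = 0"
proof (cases "pp (m + n)")
  case True
  then obtain p e where pe: "prime p" "e \<ge> 1" "m + n = p ^ e" by blast
  have "p dvd ((m + n) choose m)"
    by (rule NT1[OF pe(1), of m e]) (use assms pe in auto)
  then obtain t where t: "(m + n) choose m = p * t" by blast
  have "sm (of_nat ((m + n) choose m)) (phi_n phi (m + n) a) = sm (of_nat (t * p)) ((phi p ^^ e) a)"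
    using t pe(3) phi_n_pp[OF pe(1,2), where phi=phi] by (simp add: mult.commute)
  also have "\<dots> = sm (of_nat t) (sm (of_nat p) ((phi p ^^ e) a))" by (rule mod_nat_mult[OF u_mod])
  also have "\<dots> = 0" using u_iter_pann[OF pe(1,2)] mod_zero[OF u_mod] by simp
  finally show ?thesis .
next
  case False
  have "m + n \<noteq> 1" using assms by simp
  then show ?thesis using phi_n_np[OF _ False, where phi=phi] mod_zero[OF u_mod] by simp
qed

lemma u_comp:
  assumes m: "m \<ge> 1" and n: "n \<ge> 1"
  shows "phi_n phi m (phi_n phi n a) =
     sm (of_nat (fact (m * n) div (fact m * fact n ^ m))) (phi_n phi (m * n) a)"
proof -
  have one: "sm (of_nat 1) x = x" for x using u_mod unfolding is_module_def by simp
  show ?thesis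
  proof (cases "m = 1")
    case True
    then show ?thesis using one by (simp add: phi_n_1)
  next
    case m1: False
    show ?thesis
    proof (cases "n = 1")
      case True
      have "fact m div (fact m * 1) = (1::nat)" by simp
      then show ?thesis using True one by (simp add: phi_n_1)
    next
      case n1: False
      have m2: "m \<ge> 2" and n2: "n \<ge> 2" using m n m1 n1 by auto
      have mn1: "m * n \<noteq> 1" using m2 by simp
      show ?thesis
      proof (cases "pp m")
        case False
        have "\<not> pp (m * n)" using pp_mult m2 False by blast
        then show ?thesis using phi_n_np[OF m1 False, where phi=phi] phi_n_np[OF mn1, where phi=phi] mod_zero[OF u_mod] by simp
      next
        case pm: True
        show ?thesis
        proof (cases "pp n")
          case False
          have "\<not> pp (n * m)" using pp_mult n2 False by blast
          hence "\<not> pp (m * n)" by (simp add: mult.commute)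
          then show ?thesis using phi_n_np[OF n1 False, where phi=phi] phi_n_np[OF mn1, where phi=phi] mod_zero[OF u_mod] u_phin_zero by simp
        next
          case pn: True
          obtain p i where pa: "prime p" "i \<ge> 1" "m = p ^ i" using pm by blast
          obtain q j where qb: "prime q" "j \<ge> 1" "n = q ^ j" using pn by blast
          show ?thesis
          proof (cases "p = q")
            case False
            have "\<not> pp (m * n)" using pp_distinct[OF pa(1) qb(1) False pa(2) qb(2)] pa qb by simp
            then show ?thesis
              using phi_n_np[OF mn1, where phi=phi] mod_zero[OF u_mod] u_distinct[OF pa(1) qb(1) False pa(2) qb(2)]
                phi_n_pp[OF pa(1,2), where phi=phi] phi_n_pp[OF qb(1,2), where phi=phi] pa qb by simp
          next
            case True
            have mn: "m * n = p ^ (i + j)" using pa qb True by (simp add: power_add)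
            have ab: "i + j \<ge> 1" using pa by simp
            have lhs: "phi_n phi m (phi_n phi n x) = (phi p ^^ (i + j)) x" for x
              using phi_n_pp[OF pa(1,2), where phi=phi] phi_n_pp[OF qb(1,2), where phi=phi] pa qb True by (simp add: funpow_add)
            have c: "(fact (m * n) div (fact m * fact n ^ m)) mod p = (1::nat)"
              using NT3[OF pa(1), of m j] pa(1) qb True unfolding cong_def
              by (metis mod_less prime_gt_1_nat)
            have "sm (of_nat (fact (m * n) div (fact m * fact n ^ m))) ((phi p ^^ (i + j)) a) = (phi p ^^ (i + j)) a"
              by (rule mod_cong1[OF u_mod u_iter_pann[OF pa(1) ab] c])
            then show ?thesis using lhs mn phi_n_pp[OF pa(1) ab, where phi=phi] by simp
          qed
        qed
      qed
    qed
  qed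
qed

lemma u_dp: "is_dp_alg sm (\<lambda>_ _. 0) (phi_n phi)"
  unfolding is_dp_alg_def
proof (intro conjI allI impI)
  show "is_algebra sm (\<lambda>_ _. 0)" unfolding is_algebra_def using u_mod mod_zero[OF u_mod] by simp
  show "phi_n phi 1 a = a" for a by (simp add: phi_n_1)
  show "phi_n phi n (a + b) = phi_n phi n a + (\<Sum>i\<in>{1..<n}. (0::'a)) + phi_n phi n b" for n a b
    using u_phin_add by simp
  show "phi_n phi n 0 = 0" for n :: nat by (rule u_phin_zero)
  show "phi_n phi n (sm r b) = sm (r ^ n) (phi_n phi n b)" if "n \<ge> 1" for n r b
    using u_phin_smult that by blast
  show "0 = sm (of_nat (fact (m + n) div (fact m * fact n))) (phi_n phi (m + n) a)"
    if "m \<ge> 1" "n \<ge> 1" for m n a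
    using u_prod[OF that, of a] fact_div_choose[of m n] by simp
  show "phi_n phi m (phi_n phi n a) =
     sm (of_nat (fact (m * n) div (fact m * fact n ^ m))) (phi_n phi (m * n) a)"
    if "m \<ge> 1" "n \<ge> 1" for m n a using u_comp that by blast
qed

end



lemma hom_phin:
  fixes f :: "'a::ab_group_add \<Rightarrow> 'b::ab_group_add"
  assumes F: "\<forall>x y. f (x + y) = f x + f y"
    and C: "\<forall>p x. prime p \<longrightarrow> f (phiA p x) = phiB p (f x)"
  shows "f (phi_n phiA n x) = phi_n phiB n (f x)"
proof (cases "n = 1")
  case True then show ?thesis by (simp add: phi_n_1)
next
  case False
  show ?thesis
  proof (cases "pp n")
    case True
    then obtain p e where pe: "prime p" "e \<ge> 1" "n = p ^ e" by blast
    have "f ((phiA p ^^ e) x) = (phiB p ^^ e) (f x)"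
      by (rule hom_funpow) (use C pe in blast)
    then show ?thesis using pe phi_n_pp[OF pe(1,2), where phi=phiA] phi_n_pp[OF pe(1,2), where phi=phiB] by simp
  next
    case np: False
    show ?thesis using phi_n_np[OF False np, where phi=phiA] phi_n_np[OF False np, where phi=phiB] add_zero[OF F] by simp
  qed
qed

theorem mainTheorem3:
  fixes smultA :: "'r::comm_ring_1 \<Rightarrow> 'a::ab_group_add \<Rightarrow> 'a"
    and smultB :: "'r \<Rightarrow> 'b::ab_group_add \<Rightarrow> 'b"
  shows
    \<comment> \<open>objects: DP algebra with zero product \<mapsto> U(0)-module with phi_p = gamma_p\<close>
    "(\<forall>gamma. is_dp_alg smultA zmult gamma \<longrightarrow> is_U0_module smultA gamma)
     \<comment> \<open>objects: U(0)-module \<mapsto> DP algebra with zero product and gamma_n = phi_n\<close>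
   \<and> (\<forall>phi. is_U0_module smultA phi \<longrightarrow> is_dp_alg smultA zmult (phi_n phi))
     \<comment> \<open>the two constructions are mutually inverse\<close>
   \<and> (\<forall>gamma. is_dp_alg smultA zmult gamma \<longrightarrow> (\<forall>n\<ge>1. phi_n gamma n = gamma n))
   \<and> (\<forall>phi. is_U0_module smultA phi \<longrightarrow> (\<forall>p. prime p \<longrightarrow> phi_n phi p = phi p))
     \<comment> \<open>morphisms correspond (functors are fully faithful, identity on maps)\<close>
   \<and> (\<forall>gA gB f. is_dp_alg smultA zmult gA \<longrightarrow> is_dp_alg smultB zmult gB \<longrightarrow>
        (is_dp_hom smultA zmult gA smultB zmult gB f \<longleftrightarrow> is_U0_hom smultA gA smultB gB f))
   \<and> (\<forall>phiA phiB f. is_U0_module smultA phiA \<longrightarrow> is_U0_module smultB phiB \<longrightarrow>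
        (is_U0_hom smultA phiA smultB phiB f \<longleftrightarrow>
         is_dp_hom smultA zmult (phi_n phiA) smultB zmult (phi_n phiB) f))"
proof (intro conjI allI impI)
  show "is_U0_module smultA gamma" if "is_dp_alg smultA zmult gamma" for gamma
    using dp_U0[OF that] .
  show "is_dp_alg smultA zmult (phi_n phi)" if "is_U0_module smultA phi" for phi
    using u_dp[OF that] .
  show "phi_n gamma n = gamma n" if "is_dp_alg smultA zmult gamma" "n \<ge> 1" for gamma n
    using dp_phi_n[OF that] .
  show "phi_n phi p = phi p" if "is_U0_module smultA phi" "prime p" for phi p
    using u_phin_prime[OF that] .
next
  fix gA gB f
  assume A: "is_dp_alg smultA zmult gA" and B: "is_dp_alg smultB zmult gB"
  show "is_dp_hom smultA zmult gA smultB zmult gB f \<longleftrightarrow> is_U0_hom smultA gA smultB gB f"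
  proof
    assume "is_dp_hom smultA zmult gA smultB zmult gB f"
    thus "is_U0_hom smultA gA smultB gB f" unfolding is_dp_hom_def is_U0_hom_def
      using prime_ge_1_nat by blast
  next
    assume H: "is_U0_hom smultA gA smultB gB f"
    have L: "is_linear smultA smultB f" using H unfolding is_U0_hom_def by blast
    have F: "\<forall>x y. f (x + y) = f x + f y" using L unfolding is_linear_def by blast
    have C: "\<forall>p x. prime p \<longrightarrow> f (gA p x) = gB p (f x)" using H unfolding is_U0_hom_def by blast
    have "f (gA n a) = gB n (f a)" if "n \<ge> 1" for n a
      using hom_phin[OF F C, of n a] dp_phi_n[OF A that] dp_phi_n[OF B that] by simp
    thus "is_dp_hom smultA zmult gA smultB zmult gB f" unfolding is_dp_hom_def
      using L add_zero[OF F] by simp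
  qed
next
  fix phiA phiB f
  assume A: "is_U0_module smultA phiA" and B: "is_U0_module smultB phiB"
  show "is_U0_hom smultA phiA smultB phiB f \<longleftrightarrow>
         is_dp_hom smultA zmult (phi_n phiA) smultB zmult (phi_n phiB) f"
  proof
    assume H: "is_U0_hom smultA phiA smultB phiB f"
    have L: "is_linear smultA smultB f" using H unfolding is_U0_hom_def by blast
    have F: "\<forall>x y. f (x + y) = f x + f y" using L unfolding is_linear_def by blast
    have C: "\<forall>p x. prime p \<longrightarrow> f (phiA p x) = phiB p (f x)" using H unfolding is_U0_hom_def by blast
    show "is_dp_hom smultA zmult (phi_n phiA) smultB zmult (phi_n phiB) f" unfolding is_dp_hom_def
      using L add_zero[OF F] hom_phin[OF F C] by simp
  next
    assume H: "is_dp_hom smultA zmult (phi_n phiA) smultB zmult (phi_n phiB) f"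
    have "f (phiA p x) = phiB p (f x)" if "prime p" for p x
      using H u_phin_prime[OF A that] u_phin_prime[OF B that] prime_ge_1_nat[OF that]
      unfolding is_dp_hom_def by metis
    thus "is_U0_hom smultA phiA smultB phiB f" using H unfolding is_U0_hom_def is_dp_hom_def by blast
  qed
qed

end
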